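(* Let $\mathcal C$ be a small strongly upper-triangular linear category. Then $\operatorname{HH}_0(\mathcal C)\cong\mathbb Z\operatorname{Ob}(\mathcal C)$, the free abelian group on $\operatorname{Ob}(\mathcal C)$, and $\operatorname{HH}_i(\mathcal C)=0$ for all $i>0$.
   Context: A small linear category $\mathcal C$ is upper-triangular if there is a partial order $\le$ on $\operatorname{Ob}(\mathcal C)$ such that $\mathcal C(x,y)\neq0$ implies $x\le y$; it is strongly upper-triangular if moreover $\mathcal C(x,x)\cong\mathbb Z$ (as rings) for every object $x$. $\operatorname{HH}_*(\mathcal C)$ denotes Hochschild–Mitchell homology: the homology of the complex $C_n=\bigoplus_{x_0,\dots,x_n}\mathcal C(x_n,x_0)\otimes\mathcal C(x_{n-1},x_n)\otimes\dots\otimes\mathcal C(x_0,x_1)$ with $d_n(f_n\otimes\dots\otimes f_0)=\sum_{i=0}^{n-1}(-1)^i f_n\otimes\dots\otimes f_{n-i}f_{n-i-1}\otimes\dots\otimes f_0+(-1)^n f_0f_n\otimes f_{n-1}\otimes\dots\otimes f_1$. *)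

theory Defs
  imports "HOL-Algebra.Free_Abelian_Groups" "HOL-Algebra.Elementary_Groups" "HOL-Algebra.IntRing"
begin

text \<open>A small linear category: a set of objects, for each pair of objects a hom-set
  (morphisms x to y) carrying an abelian group structure, composition
  lc_comp x y z g f = g o f (for f : x to y, g : y to z), and identities.\<close>

record ('o, 'm) lincat =
  lc_Ob :: "'o set"
  lc_Hom :: "'o \<Rightarrow> 'o \<Rightarrow> 'm set"
  lc_add :: "'o \<Rightarrow> 'o \<Rightarrow> 'm \<Rightarrow> 'm \<Rightarrow> 'm"
  lc_zero :: "'o \<Rightarrow> 'o \<Rightarrow> 'm"
  lc_comp :: "'o \<Rightarrow> 'o \<Rightarrow> 'o \<Rightarrow> 'm \<Rightarrow> 'm \<Rightarrow> 'm"
  lc_id :: "'o \<Rightarrow> 'm"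

definition hom_group :: "('o, 'm) lincat \<Rightarrow> 'o \<Rightarrow> 'o \<Rightarrow> 'm monoid" where
  "hom_group C x y = \<lparr>carrier = lc_Hom C x y, monoid.mult = lc_add C x y, one = lc_zero C x y\<rparr>"

definition linear_category :: "('o, 'm) lincat \<Rightarrow> bool" where
  "linear_category C \<longleftrightarrow>
    (\<forall>x\<in>lc_Ob C. \<forall>y\<in>lc_Ob C. comm_group (hom_group C x y)) \<and>
    (\<forall>x\<in>lc_Ob C. \<forall>y\<in>lc_Ob C. \<forall>z\<in>lc_Ob C. \<forall>f\<in>lc_Hom C x y. \<forall>g\<in>lc_Hom C y z.
        lc_comp C x y z g f \<in> lc_Hom C x z) \<and>
    (\<forall>x\<in>lc_Ob C. lc_id C x \<in> lc_Hom C x x) \<and>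
    (\<forall>x\<in>lc_Ob C. \<forall>y\<in>lc_Ob C. \<forall>f\<in>lc_Hom C x y.
        lc_comp C x y y (lc_id C y) f = f \<and> lc_comp C x x y f (lc_id C x) = f) \<and>
    (\<forall>w\<in>lc_Ob C. \<forall>x\<in>lc_Ob C. \<forall>y\<in>lc_Ob C. \<forall>z\<in>lc_Ob C.
       \<forall>f\<in>lc_Hom C w x. \<forall>g\<in>lc_Hom C x y. \<forall>h\<in>lc_Hom C y z.
        lc_comp C w y z h (lc_comp C w x y g f) = lc_comp C w x z (lc_comp C x y z h g) f) \<and>
    (\<forall>x\<in>lc_Ob C. \<forall>y\<in>lc_Ob C. \<forall>z\<in>lc_Ob C. \<forall>f\<in>lc_Hom C x y. \<forall>f'\<in>lc_Hom C x y.
       \<forall>g\<in>lc_Hom C y z. \<forall>g'\<in>lc_Hom C y z.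
        lc_comp C x y z (lc_add C y z g g') f = lc_add C x z (lc_comp C x y z g f) (lc_comp C x y z g' f) \<and>
        lc_comp C x y z g (lc_add C x y f f') = lc_add C x z (lc_comp C x y z g f) (lc_comp C x y z g f'))"

definition end_ring :: "('o, 'm) lincat \<Rightarrow> 'o \<Rightarrow> 'm ring" where
  "end_ring C x = \<lparr>carrier = lc_Hom C x x, monoid.mult = lc_comp C x x x, one = lc_id C x,
                   zero = lc_zero C x x, add = lc_add C x x\<rparr>"

definition upper_triangular :: "('o, 'm) lincat \<Rightarrow> bool" where
  "upper_triangular C \<longleftrightarrow>
    (\<exists>le. partial_order_on (lc_Ob C) le \<and>
       (\<forall>x\<in>lc_Ob C. \<forall>y\<in>lc_Ob C. lc_Hom C x y \<noteq> {lc_zero C x y} \<longrightarrow> (x, y) \<in> le))"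

definition strongly_upper_triangular :: "('o, 'm) lincat \<Rightarrow> bool" where
  "strongly_upper_triangular C \<longleftrightarrow>
    upper_triangular C \<and> (\<forall>x\<in>lc_Ob C. end_ring C x \<simeq> \<Z>)"

text \<open>A generator of C_n: objects xs = [x_0,...,x_n] and morphisms fs = [f_0,...,f_n]
  with f_i : x_i to x_(i+1) (indices mod n+1), i.e. f_n : x_n to x_0.  The chain
  group C_n is the free abelian group on these generators modulo multilinearity
  in each slot, i.e. the direct sum over (x_0,...,x_n) of the tensor products
  C(x_n,x_0) (x) C(x_(n-1),x_n) (x) ... (x) C(x_0,x_1).\<close>

definition chain_gens :: "('o, 'm) lincat \<Rightarrow> nat \<Rightarrow> ('o list \<times> 'm list) set" where
  "chain_gens C n = {(xs, fs). length xs = Suc n \<and> length fs = Suc n \<and> set xs \<subseteq> lc_Ob C \<and>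
      (\<forall>i\<le>n. fs ! i \<in> lc_Hom C (xs ! i) (xs ! (Suc i mod Suc n)))}"

definition chain_group :: "('o, 'm) lincat \<Rightarrow> nat \<Rightarrow> (('o list \<times> 'm list) \<Rightarrow>\<^sub>0 int) monoid" where
  "chain_group C n = free_Abelian_group (chain_gens C n)"

definition multilin_rels :: "('o, 'm) lincat \<Rightarrow> nat \<Rightarrow> (('o list \<times> 'm list) \<Rightarrow>\<^sub>0 int) set" where
  "multilin_rels C n = {frag_of (xs, fs[i := lc_add C (xs ! i) (xs ! (Suc i mod Suc n)) f g])
       - frag_of (xs, fs[i := f]) - frag_of (xs, fs[i := g]) | xs fs i f g.
       (xs, fs) \<in> chain_gens C n \<and> i \<le> n \<and>
       f \<in> lc_Hom C (xs ! i) (xs ! (Suc i mod Suc n)) \<and>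
       g \<in> lc_Hom C (xs ! i) (xs ! (Suc i mod Suc n))}"

definition tensor_rels :: "('o, 'm) lincat \<Rightarrow> nat \<Rightarrow> (('o list \<times> 'm list) \<Rightarrow>\<^sub>0 int) set" where
  "tensor_rels C n = generate (chain_group C n) (multilin_rels C n)"

text \<open>For 1 <= j <= n, face j composes
  f_j o f_(j-1) and deletes x_j; this is the term with index i = n - j of the
  differential, with sign (-1)^(n-j).  Face 0 is the cyclic term (f_0 f_n) with
  sign (-1)^n, deleting x_0.\<close>

definition face :: "('o, 'm) lincat \<Rightarrow> nat \<Rightarrow> nat \<Rightarrow> 'o list \<times> 'm list \<Rightarrow> 'o list \<times> 'm list" where
  "face C n j s = (case s of (xs, fs) \<Rightarrow>
     (if j = 0 then
        (tl xs, take (n - 1) (tl fs) @ [lc_comp C (xs ! n) (xs ! 0) (xs ! 1) (fs ! 0) (fs ! n)])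
      else
        (take j xs @ drop (Suc j) xs,
         take (j - 1) fs @ [lc_comp C (xs ! (j - 1)) (xs ! j) (xs ! (Suc j mod Suc n)) (fs ! j) (fs ! (j - 1))]
           @ drop (Suc j) fs)))"

definition bdry :: "('o, 'm) lincat \<Rightarrow> nat \<Rightarrow> (('o list \<times> 'm list) \<Rightarrow>\<^sub>0 int) \<Rightarrow> (('o list \<times> 'm list) \<Rightarrow>\<^sub>0 int)" where
  "bdry C n = frag_extend (\<lambda>s. \<Sum>j\<le>n. frag_cmul ((-1) ^ (n - j)) (frag_of (face C n j s)))"

text \<open>Cycles and boundaries, lifted to the free level: a cycle is a chain whose
  boundary vanishes modulo the tensor relations; boundaries include the tensor
  relations.  Hence HH_n = cycles / boundaries is the homology of the complex of
  tensor products.\<close>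

definition cycles :: "('o, 'm) lincat \<Rightarrow> nat \<Rightarrow> (('o list \<times> 'm list) \<Rightarrow>\<^sub>0 int) set" where
  "cycles C n = (if n = 0 then carrier (chain_group C 0)
      else {c \<in> carrier (chain_group C n). bdry C n c \<in> tensor_rels C (n - 1)})"

definition boundaries :: "('o, 'm) lincat \<Rightarrow> nat \<Rightarrow> (('o list \<times> 'm list) \<Rightarrow>\<^sub>0 int) set" where
  "boundaries C n = generate (chain_group C n)
      (bdry C (Suc n) ` carrier (chain_group C (Suc n)) \<union> tensor_rels C n)"

definition HH :: "('o, 'm) lincat \<Rightarrow> nat \<Rightarrow> (('o list \<times> 'm list) \<Rightarrow>\<^sub>0 int) set monoid" where
  "HH C n = subgroup_generated (chain_group C n) (cycles C n) Mod boundaries C n"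

end

theory Submission
  imports Defs
begin

locale sut =
  fixes C :: "('o, 'm) lincat"
  assumes lin: "linear_category C"
    and sut: "strongly_upper_triangular C"
begin

abbreviation "Ob \<equiv> lc_Ob C"
abbreviation "Hom \<equiv> lc_Hom C"
abbreviation "cmp \<equiv> lc_comp C"
abbreviation "ad \<equiv> lc_add C"
abbreviation "zr \<equiv> lc_zero C"
abbreviation "idm \<equiv> lc_id C"

lemma hg: "x \<in> Ob \<Longrightarrow> y \<in> Ob \<Longrightarrow> comm_group (hom_group C x y)"
  using lin by (simp add: linear_category_def)

lemma zr_in: "x \<in> Ob \<Longrightarrow> y \<in> Ob \<Longrightarrow> zr x y \<in> Hom x y"
  using comm_group.axioms(1)[OF hg] monoid.one_closed by (fastforce simp: hom_group_def comm_monoid_def)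

lemma ad_in: "x \<in> Ob \<Longrightarrow> y \<in> Ob \<Longrightarrow> a \<in> Hom x y \<Longrightarrow> b \<in> Hom x y \<Longrightarrow> ad x y a b \<in> Hom x y"
  using comm_group.axioms(1)[OF hg, of x y] monoid.m_closed[of "hom_group C x y" a b]
  by (fastforce simp: hom_group_def comm_monoid_def)

lemma ad_zr: "x \<in> Ob \<Longrightarrow> y \<in> Ob \<Longrightarrow> ad x y (zr x y) (zr x y) = zr x y"
  using comm_group.axioms(1)[OF hg, of x y] monoid.l_one[of "hom_group C x y" "zr x y"] zr_in[of x y]
  by (fastforce simp: hom_group_def comm_monoid_def)

lemma idem_zr: "x \<in> Ob \<Longrightarrow> y \<in> Ob \<Longrightarrow> a \<in> Hom x y \<Longrightarrow> ad x y a a = a \<Longrightarrow> a = zr x y"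
proof -
  assume xy: "x \<in> Ob" "y \<in> Ob" and a: "a \<in> Hom x y" "ad x y a a = a"
  interpret G: comm_group "hom_group C x y" using hg xy by blast
  have "a \<otimes>\<^bsub>hom_group C x y\<^esub> a = a"
    using a by (simp add: hom_group_def)
  hence "a = \<one>\<^bsub>hom_group C x y\<^esub>" using G.l_cancel_one a by (simp add: hom_group_def)
  thus ?thesis by (simp add: hom_group_def)
qed

lemma cmp_in: "x \<in> Ob \<Longrightarrow> y \<in> Ob \<Longrightarrow> z \<in> Ob \<Longrightarrow> f \<in> Hom x y \<Longrightarrow> g \<in> Hom y z \<Longrightarrow> cmp x y z g f \<in> Hom x z"
  using lin by (simp add: linear_category_def)

lemma id_in: "x \<in> Ob \<Longrightarrow> idm x \<in> Hom x x"
  using lin by (simp add: linear_category_def)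

lemma id_l: "x \<in> Ob \<Longrightarrow> y \<in> Ob \<Longrightarrow> f \<in> Hom x y \<Longrightarrow> cmp x y y (idm y) f = f"
  using lin by (simp add: linear_category_def)

lemma distl: "x \<in> Ob \<Longrightarrow> y \<in> Ob \<Longrightarrow> z \<in> Ob \<Longrightarrow> f \<in> Hom x y \<Longrightarrow> f' \<in> Hom x y \<Longrightarrow> g \<in> Hom y z \<Longrightarrow>
   cmp x y z g (ad x y f f') = ad x z (cmp x y z g f) (cmp x y z g f')"
  using lin by (simp add: linear_category_def)

lemma distr: "x \<in> Ob \<Longrightarrow> y \<in> Ob \<Longrightarrow> z \<in> Ob \<Longrightarrow> f \<in> Hom x y \<Longrightarrow> g \<in> Hom y z \<Longrightarrow> g' \<in> Hom y z \<Longrightarrow>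
   cmp x y z (ad y z g g') f = ad x z (cmp x y z g f) (cmp x y z g' f)"
  using lin by (simp add: linear_category_def)

lemma cmp_zr1: "x \<in> Ob \<Longrightarrow> y \<in> Ob \<Longrightarrow> z \<in> Ob \<Longrightarrow> g \<in> Hom y z \<Longrightarrow> cmp x y z g (zr x y) = zr x z"
  by (metis ad_zr cmp_in distl idem_zr zr_in)

lemma cmp_zr2: "x \<in> Ob \<Longrightarrow> y \<in> Ob \<Longrightarrow> z \<in> Ob \<Longrightarrow> f \<in> Hom x y \<Longrightarrow> cmp x y z (zr y z) f = zr x z"
  by (metis ad_zr cmp_in distr idem_zr zr_in)


definition le :: "('o \<times> 'o) set" where
  "le = (SOME le. partial_order_on Ob le \<and>
       (\<forall>x\<in>Ob. \<forall>y\<in>Ob. Hom x y \<noteq> {zr x y} \<longrightarrow> (x, y) \<in> le))"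

lemma le_prop: "partial_order_on Ob le \<and> (\<forall>x\<in>Ob. \<forall>y\<in>Ob. Hom x y \<noteq> {zr x y} \<longrightarrow> (x, y) \<in> le)"
  unfolding le_def by (rule someI_ex) (use sut in \<open>simp add: strongly_upper_triangular_def upper_triangular_def\<close>)

lemma le_nz: "x \<in> Ob \<Longrightarrow> y \<in> Ob \<Longrightarrow> f \<in> Hom x y \<Longrightarrow> f \<noteq> zr x y \<Longrightarrow> (x, y) \<in> le"
  using le_prop by blast

lemma le_trans: "(x, y) \<in> le \<Longrightarrow> (y, z) \<in> le \<Longrightarrow> (x, z) \<in> le"
  using le_prop unfolding partial_order_on_def preorder_on_def trans_def by blast

lemma le_antisym: "(x, y) \<in> le \<Longrightarrow> (y, x) \<in> le \<Longrightarrow> x = y"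
  using le_prop unfolding partial_order_on_def antisym_def by blast

lemma le_refl: "x \<in> Ob \<Longrightarrow> (x, x) \<in> le"
  using le_prop unfolding partial_order_on_def preorder_on_def refl_on_def by blast

lemma anti_zr: "x \<in> Ob \<Longrightarrow> y \<in> Ob \<Longrightarrow> x \<noteq> y \<Longrightarrow> f \<in> Hom x y \<Longrightarrow> g \<in> Hom y x \<Longrightarrow>
   f = zr x y \<or> g = zr y x"
  using le_nz le_antisym by blast

lemma cmp_through: "x \<in> Ob \<Longrightarrow> y \<in> Ob \<Longrightarrow> x \<noteq> y \<Longrightarrow> f \<in> Hom x y \<Longrightarrow> g \<in> Hom y x \<Longrightarrow>
   cmp x y x g f = zr x x"
  using anti_zr cmp_zr1 cmp_zr2 by metis

definition phi :: "'o \<Rightarrow> 'm \<Rightarrow> int" where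
  "phi x = (SOME h. h \<in> ring_iso (end_ring C x) \<Z>)"

lemma phi_iso: "x \<in> Ob \<Longrightarrow> phi x \<in> ring_iso (end_ring C x) \<Z>"
  unfolding phi_def using sut unfolding strongly_upper_triangular_def is_ring_iso_def
  by (metis (no_types, lifting) ex_in_conv someI_ex)

lemma phi_mult: "x \<in> Ob \<Longrightarrow> a \<in> Hom x x \<Longrightarrow> b \<in> Hom x x \<Longrightarrow> phi x (cmp x x x a b) = phi x a * phi x b"
  using phi_iso[of x] by (simp add: ring_iso_def ring_hom_def end_ring_def)

lemma phi_add: "x \<in> Ob \<Longrightarrow> a \<in> Hom x x \<Longrightarrow> b \<in> Hom x x \<Longrightarrow> phi x (ad x x a b) = phi x a + phi x b"
  using phi_iso[of x] by (simp add: ring_iso_def ring_hom_def end_ring_def)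

lemma phi_id: "x \<in> Ob \<Longrightarrow> phi x (idm x) = 1"
  using phi_iso[of x] by (simp add: ring_iso_def ring_hom_def end_ring_def)

lemma phi_bij: "x \<in> Ob \<Longrightarrow> bij_betw (phi x) (Hom x x) UNIV"
  using phi_iso[of x] by (simp add: ring_iso_def end_ring_def)

lemma phi_zr: "x \<in> Ob \<Longrightarrow> phi x (zr x x) = 0"
  using phi_add[of x "zr x x" "zr x x"] ad_zr zr_in by simp


abbreviation "CG n \<equiv> chain_group C n"
abbreviation "gens n \<equiv> chain_gens C n"
abbreviation "rels n \<equiv> tensor_rels C n"

lemma carrier_CG: "c \<in> carrier (CG n) \<longleftrightarrow> Poly_Mapping.keys c \<subseteq> gens n"
  by (simp add: chain_group_def)

lemma gens_upd: "(xs, fs) \<in> gens n \<Longrightarrow> i \<le> n \<Longrightarrow> h \<in> Hom (xs!i) (xs!(Suc i mod Suc n)) \<Longrightarrow>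
   (xs, fs[i := h]) \<in> gens n"
  unfolding chain_gens_def by (auto simp: nth_list_update)

lemma keys3: "Poly_Mapping.keys a \<subseteq> S \<Longrightarrow> Poly_Mapping.keys b \<subseteq> S \<Longrightarrow> Poly_Mapping.keys c \<subseteq> S \<Longrightarrow>
  Poly_Mapping.keys (a - b - c) \<subseteq> S"
  by (meson Un_least keys_diff order_trans)

lemma multilin_sub: "multilin_rels C n \<subseteq> carrier (CG n)"
proof
  fix r assume "r \<in> multilin_rels C n"
  then obtain xs fs i f g where r: "r = frag_of (xs, fs[i := ad (xs ! i) (xs ! (Suc i mod Suc n)) f g])
       - frag_of (xs, fs[i := f]) - frag_of (xs, fs[i := g])"
    and h: "(xs, fs) \<in> gens n" "i \<le> n" "f \<in> Hom (xs ! i) (xs ! (Suc i mod Suc n))"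
       "g \<in> Hom (xs ! i) (xs ! (Suc i mod Suc n))"
    unfolding multilin_rels_def by blast
  have ob: "xs ! i \<in> Ob" "xs ! (Suc i mod Suc n) \<in> Ob"
    using h(1,2) unfolding chain_gens_def by auto
  have "(xs, fs[i := ad (xs ! i) (xs ! (Suc i mod Suc n)) f g]) \<in> gens n"
    by (rule gens_upd[OF h(1,2)]) (rule ad_in[OF ob h(3,4)])
  moreover have "(xs, fs[i := f]) \<in> gens n" "(xs, fs[i := g]) \<in> gens n"
    using gens_upd h by auto
  ultimately show "r \<in> carrier (CG n)"
    unfolding r carrier_CG by (intro keys3) auto
qed

lemma rels_sub: "subgroup (rels n) (CG n)"
  unfolding tensor_rels_def
  by (rule group.generate_is_subgroup) (auto simp: chain_group_def multilin_sub[unfolded chain_group_def])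

lemma rels_carrier: "a \<in> rels n \<Longrightarrow> Poly_Mapping.keys a \<subseteq> gens n"
  using subgroup.subset[OF rels_sub] carrier_CG by blast

lemma rels_add: "a \<in> rels n \<Longrightarrow> b \<in> rels n \<Longrightarrow> a + b \<in> rels n"
  using subgroup.m_closed[OF rels_sub[of n], of a b] by (simp add: chain_group_def)

lemma rels_neg: "a \<in> rels n \<Longrightarrow> - a \<in> rels n"
  using subgroup.m_inv_closed[OF rels_sub[of n], of a] rels_carrier[of a n] by (simp add: chain_group_def)

lemma rels_zero: "0 \<in> rels n"
  using subgroup.one_closed[OF rels_sub, of n] by (simp add: chain_group_def)

lemma rels_diff: "a \<in> rels n \<Longrightarrow> b \<in> rels n \<Longrightarrow> a - b \<in> rels n"
  by (metis rels_add rels_neg diff_conv_add_uminus)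

lemma rels_cmul: "a \<in> rels n \<Longrightarrow> frag_cmul k a \<in> rels n"
  by (rule frag_closure_minus_cmul[where P="\<lambda>x. x \<in> rels n"]) (auto intro: rels_zero rels_diff)

lemma rels_incl: "r \<in> multilin_rels C n \<Longrightarrow> r \<in> rels n"
  unfolding tensor_rels_def by (rule generate.incl)

lemma multilin_mem: "(xs, fs) \<in> gens n \<Longrightarrow> i \<le> n \<Longrightarrow> f \<in> Hom (xs ! i) (xs ! (Suc i mod Suc n)) \<Longrightarrow>
   g \<in> Hom (xs ! i) (xs ! (Suc i mod Suc n)) \<Longrightarrow>
   frag_of (xs, fs[i := ad (xs ! i) (xs ! (Suc i mod Suc n)) f g])
       - frag_of (xs, fs[i := f]) - frag_of (xs, fs[i := g]) \<in> rels n"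
  by (rule rels_incl) (unfold multilin_rels_def, blast)

lemma zero_slot_rels: "(xs, fs) \<in> gens n \<Longrightarrow> i \<le> n \<Longrightarrow> fs ! i = zr (xs ! i) (xs ! (Suc i mod Suc n)) \<Longrightarrow>
   frag_of (xs, fs) \<in> rels n"
proof -
  assume h: "(xs, fs) \<in> gens n" "i \<le> n" "fs ! i = zr (xs ! i) (xs ! (Suc i mod Suc n))"
  have ob: "xs ! i \<in> Ob" "xs ! (Suc i mod Suc n) \<in> Ob" and len: "length fs = Suc n"
    using h(1,2) unfolding chain_gens_def by auto
  have z: "fs ! i \<in> Hom (xs ! i) (xs ! (Suc i mod Suc n))" using h(3) zr_in[OF ob] by simp
  have u: "fs[i := fs ! i] = fs" by simp
  have "frag_of (xs, fs[i := ad (xs ! i) (xs ! (Suc i mod Suc n)) (fs ! i) (fs ! i)])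
       - frag_of (xs, fs[i := fs ! i]) - frag_of (xs, fs[i := fs ! i]) \<in> rels n"
    by (rule multilin_mem[OF h(1,2) z z])
  moreover have "fs[i := zr (xs ! i) (xs ! (Suc i mod Suc n))] = fs" using h(3) by (metis list_update_id)
  ultimately have "- frag_of (xs, fs) \<in> rels n" using ad_zr[OF ob] h(3) by simp
  from rels_neg[OF this] show ?thesis by simp
qed


definition const :: "'o list \<Rightarrow> bool" where
  "const xs \<longleftrightarrow> xs \<noteq> [] \<and> (\<forall>a\<in>set xs. a = hd xs)"

definition Rg :: "'o list \<times> 'm list \<Rightarrow> 'o \<Rightarrow>\<^sub>0 int" where
  "Rg s = (if const (fst s) then frag_cmul (prod_list (map (phi (hd (fst s))) (snd s))) (frag_of (hd (fst s))) else 0)"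

definition R :: "('o list \<times> 'm list \<Rightarrow>\<^sub>0 int) \<Rightarrow> 'o \<Rightarrow>\<^sub>0 int" where
  "R c = frag_extend Rg c"

lemma R_of[simp]: "R (frag_of s) = Rg s" by (simp add: R_def)
lemma R_0[simp]: "R 0 = 0" by (simp add: R_def)
lemma R_add: "R (a + b) = R a + R b" by (simp add: R_def frag_extend_add)
lemma R_diff: "R (a - b) = R a - R b" by (simp add: R_def frag_extend_diff)
lemma R_neg: "R (- a) = - R a" by (simp add: R_def frag_extend_minus)
lemma R_cmul: "R (frag_cmul k a) = frag_cmul k (R a)" by (simp add: R_def frag_extend_cmul)

lemma prod_upd: "i < length xs \<Longrightarrow> prod_list (map f (xs[i:=h])) =
   prod_list (map f (take i xs)) * f h * prod_list (map f (drop (Suc i) xs))"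
  by (simp add: upd_conv_take_nth_drop mult.assoc)

lemma const_nth: "const xs \<Longrightarrow> i < length xs \<Longrightarrow> xs ! i = hd xs"
  unfolding const_def by (metis nth_mem)

lemma gens_len: "(xs, fs) \<in> gens n \<Longrightarrow> length xs = Suc n \<and> length fs = Suc n \<and> set xs \<subseteq> Ob"
  unfolding chain_gens_def by auto

lemma gens_hom: "(xs, fs) \<in> gens n \<Longrightarrow> i \<le> n \<Longrightarrow> fs ! i \<in> Hom (xs ! i) (xs ! (Suc i mod Suc n))"
  unfolding chain_gens_def by auto

lemma hd_ob: "(xs, fs) \<in> gens n \<Longrightarrow> hd xs \<in> Ob"
  using gens_len by (metis hd_in_set list.size(3) nat.distinct(1) subsetD)

lemma R_multilin: "r \<in> multilin_rels C n \<Longrightarrow> R r = 0"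
proof -
  assume "r \<in> multilin_rels C n"
  then obtain xs fs i f g where r: "r = frag_of (xs, fs[i := ad (xs ! i) (xs ! (Suc i mod Suc n)) f g])
       - frag_of (xs, fs[i := f]) - frag_of (xs, fs[i := g])"
    and h: "(xs, fs) \<in> gens n" "i \<le> n" "f \<in> Hom (xs ! i) (xs ! (Suc i mod Suc n))"
       "g \<in> Hom (xs ! i) (xs ! (Suc i mod Suc n))"
    unfolding multilin_rels_def by blast
  show ?thesis
  proof (cases "const xs")
    case False
    then show ?thesis by (simp add: r R_diff Rg_def)
  next
    case True
    define x where "x = hd xs"
    have len: "length xs = Suc n" "length fs = Suc n" using gens_len[OF h(1)] by auto
    have x1: "xs ! i = x" "xs ! (Suc i mod Suc n) = x"
      using const_nth[OF True] len h(2) x_def by auto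
    have xo: "x \<in> Ob" using hd_ob[OF h(1)] x_def by simp
    have fg: "f \<in> Hom x x" "g \<in> Hom x x" using h(3,4) x1 by auto
    have il: "i < length fs" using len h(2) by simp
    show ?thesis
      using True
      by (simp add: r R_diff Rg_def x1 flip: x_def, simp add: prod_upd[OF il] phi_add[OF xo fg]
          flip: frag_cmul_diff_distrib, simp add: algebra_simps)
  qed
qed

lemma R_rels: "c \<in> rels n \<Longrightarrow> R c = 0"
proof -
  assume c: "c \<in> rels n"
  have "c \<in> generate (CG n) (multilin_rels C n)" using c by (simp add: tensor_rels_def)
  then show ?thesis
  proof (induction rule: generate.induct)
    case one
    then show ?case by (simp add: chain_group_def)
  next
    case (incl h)
    then show ?case by (rule R_multilin)
  next
    case (inv h)
    have "Poly_Mapping.keys h \<subseteq> gens n" using multilin_sub[of n] inv carrier_CG by blast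
    then show ?case using inv R_multilin by (simp add: chain_group_def R_neg)
  next
    case (eng h1 h2)
    then show ?case by (simp add: chain_group_def R_add)
  qed
qed


lemma nonconst_zero:
  assumes g: "(xs, fs) \<in> gens n" and nc: "\<not> const xs"
  shows "\<exists>i\<le>n. fs ! i = zr (xs ! i) (xs ! (Suc i mod Suc n))"
proof (rule ccontr)
  assume "\<not> ?thesis"
  hence nz: "\<And>i. i \<le> n \<Longrightarrow> fs ! i \<noteq> zr (xs ! i) (xs ! (Suc i mod Suc n))" by blast
  have len: "length xs = Suc n" and so: "set xs \<subseteq> Ob" using gens_len[OF g] by auto
  have ob: "\<And>i. i \<le> n \<Longrightarrow> xs ! i \<in> Ob" using len so by (simp add: subset_iff)
  have ob2: "\<And>i. xs ! (Suc i mod Suc n) \<in> Ob" using len so by (simp add: subset_iff)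
  have lei: "\<And>i. i \<le> n \<Longrightarrow> (xs ! i, xs ! (Suc i mod Suc n)) \<in> le"
    using le_nz ob ob2 gens_hom[OF g] nz by blast
  have up: "\<And>k. k \<le> n \<Longrightarrow> (xs ! 0, xs ! k) \<in> le"
  proof -
    fix k show "k \<le> n \<Longrightarrow> (xs ! 0, xs ! k) \<in> le"
    proof (induction k)
      case 0 then show ?case using le_refl ob by simp
    next
      case (Suc k)
      then have "(xs ! k, xs ! (Suc k mod Suc n)) \<in> le" using lei[of k] by simp
      moreover have "Suc k mod Suc n = Suc k" using Suc.prems by simp
      ultimately show ?case using Suc le_trans by simp
    qed
  qed
  have down: "\<And>m. m \<le> n \<Longrightarrow> (xs ! (n - m), xs ! 0) \<in> le"
  proof -
    fix m show "m \<le> n \<Longrightarrow> (xs ! (n - m), xs ! 0) \<in> le"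
    proof (induction m)
      case 0 then show ?case using lei[of n] by simp
    next
      case (Suc m)
      define k where "k = n - Suc m"
      have k: "k \<le> n" "Suc k = n - m" using Suc.prems k_def by auto
      have "(xs ! k, xs ! (Suc k mod Suc n)) \<in> le" using lei[of k] k(1) by blast
      moreover have "Suc k mod Suc n = Suc k" using k by simp
      ultimately have "(xs ! k, xs ! (n - m)) \<in> le" using k(2) by simp
      moreover have "(xs ! (n - m), xs ! 0) \<in> le" using Suc by simp
      ultimately show ?case using le_trans k_def by blast
    qed
  qed
  have "\<And>k. k \<le> n \<Longrightarrow> xs ! k = xs ! 0"
  proof -
    fix k assume "k \<le> n"
    then show "xs ! k = xs ! 0" using up down[of "n - k"] le_antisym by simp
  qed
  hence "const xs" unfolding const_def using len
    by (metis Zero_not_Suc hd_conv_nth in_set_conv_nth less_Suc_eq_le list.size(3))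
  with nc show False by simp
qed

lemma slot:
  assumes g: "(xs, fs) \<in> gens n" and c: "const xs" and i: "i \<le> n" and hh: "h \<in> Hom (hd xs) (hd xs)"
  shows "frag_of (xs, fs[i:=h]) - frag_cmul (phi (hd xs) h) (frag_of (xs, fs[i := idm (hd xs)])) \<in> rels n"
proof -
  define x where "x = hd xs"
  have len: "length xs = Suc n" "length fs = Suc n" using gens_len[OF g] by auto
  have x1: "xs ! i = x" "xs ! (Suc i mod Suc n) = x"
    using const_nth[OF c] len i x_def by auto
  have xo: "x \<in> Ob" using hd_ob[OF g] x_def by simp
  define F where "F h = frag_of (xs, fs[i:=h])" for h
  define gk where "gk k = inv_into (Hom x x) (phi x) k" for k
  have bij: "bij_betw (phi x) (Hom x x) UNIV" by (rule phi_bij[OF xo])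
  have gk_in: "gk k \<in> Hom x x" for k
    unfolding gk_def using bij by (metis UNIV_I bij_betw_def inv_into_into)
  have phi_gk: "phi x (gk k) = k" for k
    unfolding gk_def using bij by (simp add: bij_betw_inv_into_right)
  have inj: "a \<in> Hom x x \<Longrightarrow> b \<in> Hom x x \<Longrightarrow> phi x a = phi x b \<Longrightarrow> a = b" for a b
    using bij by (meson bij_betw_imp_inj_on inj_onD)
  have ml: "a \<in> Hom x x \<Longrightarrow> b \<in> Hom x x \<Longrightarrow> F (ad x x a b) - F a - F b \<in> rels n" for a b
    unfolding F_def using multilin_mem[OF g i, of a b] x1 by simp
  have gsuc: "gk (k+1) = ad x x (gk k) (idm x)" for k
    by (rule inj) (auto simp: gk_in ad_in xo id_in phi_gk phi_add phi_id)
  have g0: "gk 0 = zr x x"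
    by (rule inj) (auto simp: gk_in zr_in xo phi_gk phi_zr)
  have idin: "idm x \<in> Hom x x" using id_in xo by simp
  have Q: "F (gk k) - frag_cmul k (F (idm x)) \<in> rels n" for k
  proof (induction k rule: int_induct[where k=0])
    case base
    have "(xs, fs[i := zr x x]) \<in> gens n" using gens_upd[OF g i] x1 zr_in[OF xo xo] by simp
    moreover have "(fs[i := zr x x]) ! i = zr (xs ! i) (xs ! (Suc i mod Suc n))" using x1 len i by simp
    ultimately have "F (zr x x) \<in> rels n" unfolding F_def using zero_slot_rels i by blast
    then show ?case by (simp add: g0)
  next
    case (step1 k)
    have e: "F (gk (k+1)) - frag_cmul (k+1) (F (idm x)) =
       (F (ad x x (gk k) (idm x)) - F (gk k) - F (idm x)) + (F (gk k) - frag_cmul k (F (idm x)))"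
      unfolding gsuc[of k] by (simp add: frag_cmul_distrib algebra_simps)
    show ?case unfolding e by (rule rels_add[OF ml[OF gk_in idin] step1(2)])
  next
    case (step2 k)
    have e: "F (gk (k-1)) - frag_cmul (k-1) (F (idm x)) =
       (F (gk k) - frag_cmul k (F (idm x))) - (F (ad x x (gk (k-1)) (idm x)) - F (gk (k-1)) - F (idm x))"
      using gsuc[of "k-1"] by (simp add: frag_cmul_diff_distrib algebra_simps)
    show ?case unfolding e by (rule rels_diff[OF step2(2) ml[OF gk_in idin]])
  qed
  have "gk (phi x h) = h" by (rule inj) (use hh x_def gk_in phi_gk in auto)
  then show ?thesis using Q[of "phi x h"] unfolding F_def x_def by simp
qed


definition e :: "nat \<Rightarrow> 'o \<Rightarrow> 'o list \<times> 'm list" where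
  "e n x = (replicate (Suc n) x, replicate (Suc n) (idm x))"

definition E :: "nat \<Rightarrow> ('o \<Rightarrow>\<^sub>0 int) \<Rightarrow> ('o list \<times> 'm list \<Rightarrow>\<^sub>0 int)" where
  "E n a = frag_extend (\<lambda>x. frag_of (e n x)) a"

lemma E_of[simp]: "E n (frag_of x) = frag_of (e n x)" by (simp add: E_def)
lemma E_0[simp]: "E n 0 = 0" by (simp add: E_def)
lemma E_diff: "E n (a - b) = E n a - E n b" by (simp add: E_def frag_extend_diff)
lemma E_add: "E n (a + b) = E n a + E n b" by (simp add: E_def frag_extend_add)
lemma E_cmul: "E n (frag_cmul k a) = frag_cmul k (E n a)" by (simp add: E_def frag_extend_cmul)

lemma cmul_diff2: "frag_cmul c (a - b) = frag_cmul c a - frag_cmul c b"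
  by (rule poly_mapping_eqI) (simp add: lookup_minus algebra_simps)

lemma const_rep: "(xs, fs) \<in> gens n \<Longrightarrow> const xs \<Longrightarrow> xs = replicate (Suc n) (hd xs)"
  using gens_len[of xs fs n] unfolding const_def by (metis replicate_length_same)

lemma gens_const: "x \<in> Ob \<Longrightarrow> length gs = Suc n \<Longrightarrow> set gs \<subseteq> Hom x x \<Longrightarrow>
   (replicate (Suc n) x, gs) \<in> gens n"
  unfolding chain_gens_def by (auto simp del: replicate_Suc simp: nth_mem subsetD nth_replicate)

lemma gens_const_hom: "(replicate (Suc n) x, gs) \<in> gens n \<Longrightarrow> set gs \<subseteq> Hom x x"
proof
  fix g assume a: "(replicate (Suc n) x, gs) \<in> gens n" "g \<in> set gs"
  then obtain i where "i < length gs" "g = gs ! i" by (metis in_set_conv_nth)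
  then show "g \<in> Hom x x" using a gens_hom[OF a(1), of i] gens_len[OF a(1)]
    by (auto simp del: replicate_Suc simp: nth_replicate)
qed

lemma e_gens: "x \<in> Ob \<Longrightarrow> e n x \<in> gens n"
  unfolding e_def by (rule gens_const) (auto simp: id_in)

lemma const_reduce:
  assumes g: "(xs, fs) \<in> gens n" and c: "const xs"
  shows "frag_of (xs, fs) - frag_cmul (prod_list (map (phi (hd xs)) fs)) (frag_of (e n (hd xs))) \<in> rels n"
proof -
  define x where "x = hd xs"
  have xs: "xs = replicate (Suc n) x" using const_rep[OF g c] x_def by simp
  have xo: "x \<in> Ob" using hd_ob[OF g] x_def by simp
  have len: "length fs = Suc n" using gens_len[OF g] by simp
  have fsh: "set fs \<subseteq> Hom x x" using gens_const_hom g xs by simp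
  have idin: "idm x \<in> Hom x x" using id_in xo by simp
  have cx: "const (replicate (Suc n) x)" by (simp add: const_def)
  have "m \<le> Suc n \<Longrightarrow> frag_of (xs, fs) - frag_cmul (prod_list (map (phi x) (take m fs)))
          (frag_of (xs, replicate m (idm x) @ drop m fs)) \<in> rels n" for m
  proof (induction m)
    case 0
    then show ?case by (simp add: rels_zero)
  next
    case (Suc m)
    have ml: "m < length fs" using Suc.prems len by simp
    define G where "G = replicate m (idm x) @ (idm x # drop (Suc m) fs)"
    have G1: "replicate (Suc m) (idm x) @ drop (Suc m) fs = G"
      unfolding G_def by (simp add: replicate_app_Cons_same)
    have G2: "replicate m (idm x) @ drop m fs = G[m := fs ! m]"
      unfolding G_def using ml by (simp add: list_update_append Cons_nth_drop_Suc)
    have G3: "G[m := idm x] = G" unfolding G_def by (simp add: list_update_append)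
    have Gg: "(xs, G) \<in> gens n" unfolding xs
      by (rule gens_const[OF xo]) (use len ml fsh idin in \<open>auto simp: G_def dest: in_set_dropD\<close>)
    have fm: "fs ! m \<in> Hom x x" using fsh ml nth_mem by blast
    have sl: "frag_of (xs, G[m := fs ! m]) - frag_cmul (phi x (fs ! m)) (frag_of (xs, G)) \<in> rels n"
      using slot[OF Gg _ _ , of m "fs ! m"] xs cx fm Suc.prems G3 by simp
    have P: "prod_list (map (phi x) (take (Suc m) fs)) = prod_list (map (phi x) (take m fs)) * phi x (fs ! m)"
      using ml by (simp add: take_Suc_conv_app_nth)
    have eq: "frag_of (xs, fs) - frag_cmul (prod_list (map (phi x) (take (Suc m) fs)))
          (frag_of (xs, replicate (Suc m) (idm x) @ drop (Suc m) fs)) =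
       (frag_of (xs, fs) - frag_cmul (prod_list (map (phi x) (take m fs)))
          (frag_of (xs, replicate m (idm x) @ drop m fs))) +
       frag_cmul (prod_list (map (phi x) (take m fs)))
         (frag_of (xs, G[m := fs ! m]) - frag_cmul (phi x (fs ! m)) (frag_of (xs, G)))"
      unfolding G1 G2 P by (simp add: cmul_diff2 mult.commute)
    show ?case unfolding eq using Suc sl by (intro rels_add rels_cmul) auto
  qed
  from this[of "Suc n"] show ?thesis using len unfolding e_def x_def[symmetric] xs by simp
qed

lemma reduce_gen: "s \<in> gens n \<Longrightarrow> frag_of s - E n (Rg s) \<in> rels n"
proof (cases s)
  case (Pair xs fs)
  assume g: "s \<in> gens n"
  show ?thesis
  proof (cases "const xs")
    case True
    then show ?thesis using const_reduce[of xs fs n] g Pair by (simp add: Rg_def E_cmul)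
  next
    case False
    then obtain i where "i \<le> n" "fs ! i = zr (xs ! i) (xs ! (Suc i mod Suc n))"
      using nonconst_zero g Pair by blast
    then show ?thesis using zero_slot_rels g Pair False by (simp add: Rg_def)
  qed
qed

lemma reduce: "c \<in> carrier (CG n) \<Longrightarrow> c - E n (R c) \<in> rels n"
  unfolding carrier_CG
proof (induction c rule: frag_induction)
  case zero then show ?case by (simp add: rels_zero)
next
  case (one x) then show ?case using reduce_gen by simp
next
  case (diff a b)
  have eq: "a - b - E n (R (a - b)) = (a - E n (R a)) - (b - E n (R b))" by (simp add: R_diff E_diff)
  show ?case unfolding eq by (rule rels_diff[OF diff(1,2)])
qed


lemma R_E: "Poly_Mapping.keys a \<subseteq> Ob \<Longrightarrow> R (E n a) = a"
proof -
  assume a: "Poly_Mapping.keys a \<subseteq> Ob"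
  have "R (E n a) = frag_extend (Rg \<circ> e n) a"
    unfolding R_def E_def using frag_extend_compose[of Rg "e n" a] by (simp add: o_def)
  also have "\<dots> = frag_extend frag_of a"
  proof (rule frag_extend_eq)
    fix x assume "x \<in> Poly_Mapping.keys a"
    then show "(Rg \<circ> e n) x = frag_of x"
      using a by (auto simp: Rg_def e_def const_def phi_id simp del: replicate_Suc)
  qed
  finally show ?thesis by (metis frag_expansion)
qed

lemma E_carrier: "Poly_Mapping.keys a \<subseteq> Ob \<Longrightarrow> E n a \<in> carrier (CG n)"
  unfolding carrier_CG E_def using keys_frag_extend[of "\<lambda>x. frag_of (e n x)" a] e_gens by fastforce

lemma R_keys: "c \<in> carrier (CG n) \<Longrightarrow> Poly_Mapping.keys (R c) \<subseteq> Ob"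
proof -
  assume c: "c \<in> carrier (CG n)"
  have "Poly_Mapping.keys (Rg s) \<subseteq> Ob" if "s \<in> gens n" for s
    using that hd_ob[of "fst s" "snd s" n] keys_cmul
    by (auto simp: Rg_def)
  then show ?thesis using c unfolding carrier_CG R_def using keys_frag_extend[of Rg c] by blast
qed

lemma rels_iff: "c \<in> carrier (CG n) \<Longrightarrow> c \<in> rels n \<longleftrightarrow> R c = 0"
  using R_rels reduce[of c n] by auto


lemma gensI: "length xs = Suc n \<Longrightarrow> length fs = Suc n \<Longrightarrow> set xs \<subseteq> Ob \<Longrightarrow>
   (\<And>i. i \<le> n \<Longrightarrow> fs ! i \<in> Hom (xs ! i) (xs ! (Suc i mod Suc n))) \<Longrightarrow> (xs, fs) \<in> gens n"
  unfolding chain_gens_def by auto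

lemma face0:
  assumes g: "(xs, fs) \<in> gens (Suc m)"
  shows "face C (Suc m) 0 (xs, fs) \<in> gens m"
proof -
  have len: "length xs = Suc (Suc m)" "length fs = Suc (Suc m)" and so: "set xs \<subseteq> Ob"
    using gens_len[OF g] by auto
  have ob: "\<And>i. i < Suc (Suc m) \<Longrightarrow> xs ! i \<in> Ob" using len so by (metis nth_mem subsetD)
  define c where "c = cmp (xs ! Suc m) (xs ! 0) (xs ! 1) (fs ! 0) (fs ! Suc m)"
  have f: "face C (Suc m) 0 (xs, fs) = (tl xs, take m (tl fs) @ [c])"
    by (simp add: face_def c_def)
  have h0: "fs ! 0 \<in> Hom (xs ! 0) (xs ! 1)" using gens_hom[OF g, of 0] by simp
  have hn: "fs ! Suc m \<in> Hom (xs ! Suc m) (xs ! 0)" using gens_hom[OF g, of "Suc m"] by simp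
  have cin: "c \<in> Hom (xs ! Suc m) (xs ! 1)" unfolding c_def
    by (rule cmp_in) (use ob h0 hn in auto)
  show ?thesis unfolding f
  proof (rule gensI)
    show "length (tl xs) = Suc m" "length (take m (tl fs) @ [c]) = Suc m" using len by auto
    show "set (tl xs) \<subseteq> Ob" using so by (cases xs) auto
  next
    fix i assume i: "i \<le> m"
    show "(take m (tl fs) @ [c]) ! i \<in> Hom (tl xs ! i) (tl xs ! (Suc i mod Suc m))"
    proof (cases "i < m")
      case True
      have "fs ! Suc i \<in> Hom (xs ! Suc i) (xs ! (Suc (Suc i) mod Suc (Suc m)))"
        using gens_hom[OF g, of "Suc i"] True by simp
      then show ?thesis using True len by (simp add: nth_append nth_tl)
    next
      case False
      then have "i = m" using i by simp
      then show ?thesis using cin len by (simp add: nth_append nth_tl)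
    qed
  qed
qed

lemma faceS:
  assumes g: "(xs, fs) \<in> gens (Suc m)" and k: "k \<le> m"
  shows "face C (Suc m) (Suc k) (xs, fs) \<in> gens m"
proof -
  have len: "length xs = Suc (Suc m)" "length fs = Suc (Suc m)" and so: "set xs \<subseteq> Ob"
    using gens_len[OF g] by auto
  have ob: "\<And>i. i < Suc (Suc m) \<Longrightarrow> xs ! i \<in> Ob" using len so by (metis nth_mem subsetD)
  define c where "c = cmp (xs ! k) (xs ! Suc k) (xs ! (Suc (Suc k) mod Suc (Suc m))) (fs ! Suc k) (fs ! k)"
  define xs' where "xs' = take (Suc k) xs @ drop (Suc (Suc k)) xs"
  define fs' where "fs' = take k fs @ [c] @ drop (Suc (Suc k)) fs"
  have f: "face C (Suc m) (Suc k) (xs, fs) = (xs', fs')"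
    by (simp add: face_def c_def xs'_def fs'_def)
  have h0: "fs ! k \<in> Hom (xs ! k) (xs ! Suc k)" using gens_hom[OF g, of k] k by simp
  have hn: "fs ! Suc k \<in> Hom (xs ! Suc k) (xs ! (Suc (Suc k) mod Suc (Suc m)))"
    using gens_hom[OF g, of "Suc k"] k by simp
  have cin: "c \<in> Hom (xs ! k) (xs ! (Suc (Suc k) mod Suc (Suc m)))" unfolding c_def
    by (rule cmp_in) (use ob h0 hn k in auto)
  have lx: "length xs' = Suc m" using len k by (simp add: xs'_def)
  have xn: "\<And>i. i < Suc m \<Longrightarrow> xs' ! i = (if i \<le> k then xs ! i else xs ! Suc i)"
    using len k by (auto simp: xs'_def nth_append)
  have fn: "\<And>i. i < Suc m \<Longrightarrow> fs' ! i = (if i < k then fs ! i else if i = k then c else fs ! Suc i)"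
  proof -
    fix i assume i: "i < Suc m"
    show "fs' ! i = (if i < k then fs ! i else if i = k then c else fs ! Suc i)"
    proof (cases "i < k")
      case True then show ?thesis using len k by (simp add: fs'_def nth_append)
    next
      case False
      then obtain d where d: "i = k + d" by (metis le_Suc_ex not_less)
      show ?thesis using len k i False by (cases d) (auto simp: fs'_def nth_append d)
    qed
  qed
  show ?thesis unfolding f
  proof (rule gensI)
    show "length xs' = Suc m" by (rule lx)
    show "length fs' = Suc m" using len k by (simp add: fs'_def)
    have "set (take (Suc k) xs) \<subseteq> set xs" "set (drop (Suc (Suc k)) xs) \<subseteq> set xs"
      by (rule set_take_subset, rule set_drop_subset)
    then show "set xs' \<subseteq> Ob" using so unfolding xs'_def by (simp add: order_trans)
  next
    fix i assume i: "i \<le> m"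
    have m1: "Suc i mod Suc m = (if i = m then 0 else Suc i)" using i by auto
    show "fs' ! i \<in> Hom (xs' ! i) (xs' ! (Suc i mod Suc m))"
    proof (cases "i < k")
      case True
      then show ?thesis using gens_hom[OF g, of i] i k fn xn m1 by auto
    next
      case False
      show ?thesis
      proof (cases "i = k")
        case True
        then show ?thesis using cin i k fn xn m1 by (cases "k = m") auto
      next
        case False
        then have ik: "k < i" using \<open>\<not> i < k\<close> by simp
        have "fs ! Suc i \<in> Hom (xs ! Suc i) (xs ! (Suc (Suc i) mod Suc (Suc m)))"
          using gens_hom[OF g, of "Suc i"] i by simp
        then show ?thesis using ik i fn xn m1 by (cases "i = m") auto
      qed
    qed
  qed
qed

lemma face_gens: "(xs, fs) \<in> gens (Suc m) \<Longrightarrow> j \<le> Suc m \<Longrightarrow> face C (Suc m) j (xs, fs) \<in> gens m"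
  using face0 faceS by (cases j) auto

end


context sut begin

lemma drop2: "Suc k < length fs \<Longrightarrow> fs = take k fs @ fs ! k # fs ! Suc k # drop (Suc (Suc k)) fs"
  by (metis Cons_nth_drop_Suc Suc_lessD append_take_drop_id)

lemma tl2: "length fs = Suc (Suc m) \<Longrightarrow> fs = fs ! 0 # take m (tl fs) @ [fs ! Suc m]"
proof -
  assume l: "length fs = Suc (Suc m)"
  then obtain a t where fs: "fs = a # t" by (cases fs) auto
  have lt: "length t = Suc m" using l fs by simp
  have "t = take m t @ drop m t" by simp
  moreover have "drop m t = [t ! m]" using Cons_nth_drop_Suc[of m t] lt by simp
  ultimately show ?thesis using fs by simp
qed

lemma R_face_core:
  assumes g: "(xs, fs) \<in> gens (Suc m)" and g': "(xs', fs') \<in> gens m"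
    and s1: "set xs' \<subseteq> set xs" and s2: "set xs \<subseteq> insert y (set xs')"
    and uv: "u \<in> set xs'" "v \<in> set xs'" and cs: "c \<in> set fs'" and c: "c = cmp u y v b a"
    and ab: "a \<in> Hom u y" "b \<in> Hom y v" and yo: "y \<in> Ob"
    and pr: "const xs \<Longrightarrow> prod_list (map (phi (hd xs)) fs') = prod_list (map (phi (hd xs)) fs)"
  shows "Rg (xs', fs') = Rg (xs, fs)"
proof -
  have len': "length xs' = Suc m" using gens_len[OF g'] by auto
  have ne: "xs' \<noteq> []" using len' by auto
  show ?thesis
  proof (cases "const xs")
    case True
    then have A: "\<forall>a\<in>set xs'. a = hd xs" using s1 unfolding const_def by auto
    moreover have "hd xs' \<in> set xs'" using ne by simp
    ultimately have h: "hd xs' = hd xs" by blast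
    have "\<forall>a\<in>set xs'. a = hd xs'" using A by (simp only: h)
    then have "const xs'" using ne unfolding const_def by blast
    note h this
    then show ?thesis using True pr by (simp add: Rg_def)
  next
    case False
    show ?thesis
    proof (cases "const xs'")
      case False
      then show ?thesis using \<open>\<not> const xs\<close> by (simp add: Rg_def)
    next
      case True
      define x where "x = hd xs'"
      have all: "\<forall>a\<in>set xs'. a = x" using True unfolding const_def x_def by auto
      have xo: "x \<in> Ob" using hd_ob[OF g'] x_def by simp
      have "y \<noteq> x"
      proof
        assume "y = x"
        then have "\<forall>a\<in>set xs. a = x" using s2 all by auto
        moreover have "xs \<noteq> []" using gens_len[OF g] by auto
        ultimately have "const xs" unfolding const_def by (metis hd_in_set)
        then show False using \<open>\<not> const xs\<close> by simp
      qed
      have uvx: "u = x" "v = x" using uv all by blast+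
      have "c = zr x x" using cmp_through[OF xo yo \<open>y \<noteq> x\<close>[symmetric], of a b] ab c uvx
        by (metis cmp_through xo yo \<open>y \<noteq> x\<close>)
      then have "0 \<in> set (map (phi x) fs')" using cs phi_zr[OF xo] by force
      then have "prod_list (map (phi x) fs') = 0" by (simp add: prod_list_zero_iff)
      then show ?thesis using \<open>\<not> const xs\<close> True by (simp add: Rg_def x_def)
    qed
  qed
qed


lemma R_face0:
  assumes g: "(xs, fs) \<in> gens (Suc m)"
  shows "Rg (face C (Suc m) 0 (xs, fs)) = Rg (xs, fs)"
proof -
  have len: "length xs = Suc (Suc m)" "length fs = Suc (Suc m)" and so: "set xs \<subseteq> Ob"
    using gens_len[OF g] by auto
  have ob: "\<And>i. i < Suc (Suc m) \<Longrightarrow> xs ! i \<in> Ob" using len so by (metis nth_mem subsetD)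
  define c where "c = cmp (xs ! Suc m) (xs ! 0) (xs ! 1) (fs ! 0) (fs ! Suc m)"
  have f: "face C (Suc m) 0 (xs, fs) = (tl xs, take m (tl fs) @ [c])"
    by (simp add: face_def c_def)
  have g': "(tl xs, take m (tl fs) @ [c]) \<in> gens m" using face0[OF g] f by simp
  have h0: "fs ! 0 \<in> Hom (xs ! 0) (xs ! 1)" using gens_hom[OF g, of 0] by simp
  have hn: "fs ! Suc m \<in> Hom (xs ! Suc m) (xs ! 0)" using gens_hom[OF g, of "Suc m"] by simp
  obtain z t where xz: "xs = z # t" using len by (cases xs) auto
  have lt: "length t = Suc m" using len xz by simp
  show ?thesis unfolding f
  proof (rule R_face_core[OF g g' _ _ _ _ _ c_def hn h0])
    show "set (tl xs) \<subseteq> set xs" by (simp add: xz subset_insertI)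
    show "set xs \<subseteq> insert (xs ! 0) (set (tl xs))" by (simp add: xz subset_insertI)
    show "xs ! Suc m \<in> set (tl xs)" using lt by (simp add: xz)
    show "xs ! 1 \<in> set (tl xs)" using lt by (simp add: xz)
    show "c \<in> set (take m (tl fs) @ [c])" by simp
    show "xs ! 0 \<in> Ob" using ob by simp
  next
    assume cst: "const xs"
    define x where "x = hd xs"
    have xs: "xs = replicate (Suc (Suc m)) x" using const_rep[OF g cst] x_def by simp
    have xo: "x \<in> Ob" using hd_ob[OF g] x_def by simp
    have fsh: "set fs \<subseteq> Hom x x" using g unfolding xs by (rule gens_const_hom)
    have i0: "fs ! 0 \<in> Hom x x" "fs ! Suc m \<in> Hom x x" using fsh len by (auto simp: nth_mem subsetD)
    have "xs ! Suc m = x" "xs ! 0 = x" "xs ! 1 = x" using xs by (auto simp del: replicate_Suc simp: nth_replicate)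
    then have pc: "phi x c = phi x (fs ! 0) * phi x (fs ! Suc m)" unfolding c_def using phi_mult[OF xo i0] by simp
    have "prod_list (map (phi x) fs) = prod_list (map (phi x) (fs ! 0 # take m (tl fs) @ [fs ! Suc m]))"
      using tl2[OF len(2)] by metis
    then show "prod_list (map (phi (hd xs)) (take m (tl fs) @ [c])) = prod_list (map (phi (hd xs)) fs)"
      by (simp add: pc flip: x_def)
  qed
qed

lemma R_faceS:
  assumes g: "(xs, fs) \<in> gens (Suc m)" and k: "k \<le> m"
  shows "Rg (face C (Suc m) (Suc k) (xs, fs)) = Rg (xs, fs)"
proof -
  have len: "length xs = Suc (Suc m)" "length fs = Suc (Suc m)" and so: "set xs \<subseteq> Ob"
    using gens_len[OF g] by auto
  have ob: "\<And>i. i < Suc (Suc m) \<Longrightarrow> xs ! i \<in> Ob" using len so by (metis nth_mem subsetD)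
  define c where "c = cmp (xs ! k) (xs ! Suc k) (xs ! (Suc (Suc k) mod Suc (Suc m))) (fs ! Suc k) (fs ! k)"
  define xs' where "xs' = take (Suc k) xs @ drop (Suc (Suc k)) xs"
  define fs' where "fs' = take k fs @ [c] @ drop (Suc (Suc k)) fs"
  have f: "face C (Suc m) (Suc k) (xs, fs) = (xs', fs')"
    by (simp add: face_def c_def xs'_def fs'_def)
  have g': "(xs', fs') \<in> gens m" using faceS[OF g k] f by simp
  have h0: "fs ! k \<in> Hom (xs ! k) (xs ! Suc k)" using gens_hom[OF g, of k] k by simp
  have hn: "fs ! Suc k \<in> Hom (xs ! Suc k) (xs ! (Suc (Suc k) mod Suc (Suc m)))"
    using gens_hom[OF g, of "Suc k"] k by simp
  have xsplit: "xs = take (Suc k) xs @ xs ! Suc k # drop (Suc (Suc k)) xs"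
    using len k by (metis Cons_nth_drop_Suc Suc_le_mono append_take_drop_id le_imp_less_Suc)
  show ?thesis unfolding f
  proof (rule R_face_core[OF g g' _ _ _ _ _ c_def h0 hn])
    show "set xs' \<subseteq> set xs" unfolding xs'_def
      using set_take_subset[of "Suc k" xs] set_drop_subset[of "Suc (Suc k)" xs] by auto
    show "set xs \<subseteq> insert (xs ! Suc k) (set xs')" unfolding xs'_def
      by (subst xsplit) auto
    show "xs ! k \<in> set xs'" unfolding xs'_def using len k
      by (metis Un_iff in_set_conv_nth length_take less_Suc_eq min_less_iff_conj nth_take set_append zero_less_Suc lessI le_imp_less_Suc Suc_le_mono)
    show "xs ! (Suc (Suc k) mod Suc (Suc m)) \<in> set xs'"
    proof (cases "k = m")
      case True
      have "take (Suc k) xs ! 0 = xs ! 0" by simp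
      moreover have "0 < length (take (Suc k) xs)" using len by simp
      ultimately have "xs ! 0 \<in> set (take (Suc k) xs)" by (metis nth_mem)
      then show ?thesis unfolding xs'_def using True by simp
    next
      case False
      then have "Suc (Suc k) < Suc (Suc m)" using k by simp
      then have "xs ! Suc (Suc k) \<in> set (drop (Suc (Suc k)) xs)" using len
        by (metis Cons_nth_drop_Suc list.set_intros(1))
      then show ?thesis unfolding xs'_def using \<open>Suc (Suc k) < Suc (Suc m)\<close> by simp
    qed
    show "c \<in> set fs'" by (simp add: fs'_def)
    show "xs ! Suc k \<in> Ob" using ob k by simp
  next
    assume cst: "const xs"
    define x where "x = hd xs"
    have xs: "xs = replicate (Suc (Suc m)) x" using const_rep[OF g cst] x_def by simp
    have xo: "x \<in> Ob" using hd_ob[OF g] x_def by simp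
    have fsh: "set fs \<subseteq> Hom x x" using g unfolding xs by (rule gens_const_hom)
    have i0: "fs ! Suc k \<in> Hom x x" "fs ! k \<in> Hom x x" using fsh len k by (auto simp: nth_mem subsetD)
    have "xs ! k = x" "xs ! Suc k = x" "xs ! (Suc (Suc k) mod Suc (Suc m)) = x"
      using xs k by (auto simp del: replicate_Suc simp: nth_replicate)
    then have pc: "phi x c = phi x (fs ! Suc k) * phi x (fs ! k)" unfolding c_def using phi_mult[OF xo i0] by simp
    have "prod_list (map (phi x) fs) = prod_list (map (phi x) (take k fs @ fs ! k # fs ! Suc k # drop (Suc (Suc k)) fs))"
      using drop2[of k fs] len k by (metis Suc_le_mono le_imp_less_Suc)
    then show "prod_list (map (phi (hd xs)) fs') = prod_list (map (phi (hd xs)) fs)"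
      by (simp add: pc fs'_def mult_ac flip: x_def)
  qed
qed

lemma R_face: "(xs, fs) \<in> gens (Suc m) \<Longrightarrow> j \<le> Suc m \<Longrightarrow> Rg (face C (Suc m) j (xs, fs)) = Rg (xs, fs)"
  using R_face0 R_faceS by (cases j) auto


definition eps :: "nat \<Rightarrow> int" where "eps n = (\<Sum>j\<le>n. (-1::int) ^ (n - j))"

lemma eps_val: "eps n = (if even n then 1 else 0)"
proof (induction n)
  case 0 then show ?case by (simp add: eps_def)
next
  case (Suc n)
  have "eps (Suc n) = (\<Sum>j\<le>n. (-1::int) ^ (Suc n - j)) + 1" by (simp add: eps_def)
  also have "(\<Sum>j\<le>n. (-1::int) ^ (Suc n - j)) = (\<Sum>j\<le>n. - ((-1::int) ^ (n - j)))"
    by (rule sum.cong) (auto simp: Suc_diff_le)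
  also have "\<dots> = - eps n" by (simp add: eps_def sum_negf)
  finally show ?case using Suc by simp
qed

definition Bf :: "nat \<Rightarrow> 'o list \<times> 'm list \<Rightarrow> ('o list \<times> 'm list \<Rightarrow>\<^sub>0 int)" where
  "Bf n s = (\<Sum>j\<le>n. frag_cmul ((-1) ^ (n - j)) (frag_of (face C n j s)))"

lemma bdry_eq: "bdry C n = frag_extend (Bf n)"
  unfolding bdry_def Bf_def by simp

lemma sum_cmul_const: "finite J \<Longrightarrow> (\<Sum>j\<in>J. frag_cmul (k j) a) = frag_cmul (\<Sum>j\<in>J. k j) a"
  by (induction J rule: finite_induct) (auto simp: frag_cmul_distrib)

lemma frag_extend_cmul_fun: "frag_extend (\<lambda>x. frag_cmul k (f x)) a = frag_cmul k (frag_extend f a)"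
  unfolding frag_extend_def by (simp add: frag_cmul_sum mult.commute)

lemma R_B: "s \<in> gens (Suc m) \<Longrightarrow> R (Bf (Suc m) s) = frag_cmul (eps (Suc m)) (Rg s)"
proof -
  assume sg: "s \<in> gens (Suc m)"
  have "R (Bf (Suc m) s) = (\<Sum>j\<le>Suc m. frag_cmul ((-1) ^ (Suc m - j)) (Rg (face C (Suc m) j s)))"
    unfolding Bf_def R_def by (simp add: frag_extend_sum o_def frag_extend_cmul del: sum.atMost_Suc)
  also have "\<dots> = (\<Sum>j\<le>Suc m. frag_cmul ((-1) ^ (Suc m - j)) (Rg s))"
    using R_face[of "fst s" "snd s" m] sg by (intro sum.cong) auto
  also have "\<dots> = frag_cmul (eps (Suc m)) (Rg s)" by (simp add: sum_cmul_const eps_def del: sum.atMost_Suc)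
  finally show ?thesis .
qed

lemma bdry_of: "bdry C n (frag_of s) = Bf n s" by (simp add: bdry_eq)
lemma bdry_diff: "bdry C n (a - b) = bdry C n a - bdry C n b" by (simp add: bdry_eq frag_extend_diff)
lemma bdry_add: "bdry C n (a + b) = bdry C n a + bdry C n b" by (simp add: bdry_eq frag_extend_add)
lemma bdry_0: "bdry C n 0 = 0" by (simp add: bdry_eq)
lemma bdry_neg: "bdry C n (- a) = - bdry C n a" by (simp add: bdry_eq frag_extend_minus)

lemma R_bdry: "c \<in> carrier (CG (Suc m)) \<Longrightarrow> R (bdry C (Suc m) c) = frag_cmul (eps (Suc m)) (R c)"
  unfolding carrier_CG
proof (induction c rule: frag_induction)
  case zero then show ?case by (simp add: bdry_0)
next
  case (one x) then show ?case by (simp add: bdry_of R_B)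
next
  case (diff a b) then show ?case by (simp add: bdry_diff R_diff cmul_diff2)
qed

lemma Bf_keys: "s \<in> gens (Suc m) \<Longrightarrow> Poly_Mapping.keys (Bf (Suc m) s) \<subseteq> gens m"
proof -
  assume sg: "s \<in> gens (Suc m)"
  have "Poly_Mapping.keys (Bf (Suc m) s) \<subseteq> (\<Union>j\<le>Suc m. Poly_Mapping.keys (frag_cmul ((-1) ^ (Suc m - j)) (frag_of (face C (Suc m) j s))))"
    unfolding Bf_def by (rule keys_sum)
  also have "\<dots> \<subseteq> gens m"
    using face_gens[of "fst s" "snd s" m] sg keys_cmul by fastforce
  finally show ?thesis .
qed

lemma bdry_carrier: "c \<in> carrier (CG (Suc m)) \<Longrightarrow> bdry C (Suc m) c \<in> carrier (CG m)"
  unfolding carrier_CG bdry_eq using keys_frag_extend[of "Bf (Suc m)" c] Bf_keys by blast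

lemma face_e: "x \<in> Ob \<Longrightarrow> j \<le> Suc m \<Longrightarrow> face C (Suc m) j (e (Suc m) x) = e m x"
proof (cases j)
  case 0
  assume xo: "x \<in> Ob"
  have ii: "cmp x x x (idm x) (idm x) = idm x" using id_l[OF xo xo id_in[OF xo]] .
  show ?thesis using 0 ii
    by (simp add: face_def e_def nth_replicate del: replicate_Suc)
       (simp add: replicate_append_same[symmetric])
next
  case (Suc k)
  assume xo: "x \<in> Ob" and j: "j \<le> Suc m"
  have ii: "cmp x x x (idm x) (idm x) = idm x" using id_l[OF xo xo id_in[OF xo]] .
  have k: "k \<le> m" using j Suc by simp
  have 1: "replicate (Suc k) x @ replicate (m - k) x = replicate (Suc m) x" using k
    by (simp add: replicate_add[symmetric] del: replicate_Suc)
  have 2: "replicate k (idm x) @ idm x # replicate (m - k) (idm x) = replicate (Suc m) (idm x)" using k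
    by (metis "1" Suc_diff_le append_Cons length_replicate replicate_Suc replicate_add
        replicate_app_Cons_same add_Suc)
  show ?thesis using Suc k ii 1 2
    by (simp add: face_def e_def nth_replicate del: replicate_Suc)
qed

lemma bdry_E: "Poly_Mapping.keys a \<subseteq> Ob \<Longrightarrow> bdry C (Suc m) (E (Suc m) a) = frag_cmul (eps (Suc m)) (E m a)"
proof -
  assume a: "Poly_Mapping.keys a \<subseteq> Ob"
  have "bdry C (Suc m) (E (Suc m) a) = frag_extend (Bf (Suc m) \<circ> e (Suc m)) a"
    unfolding bdry_eq E_def using frag_extend_compose[of "Bf (Suc m)" "e (Suc m)" a] by (simp add: o_def)
  also have "\<dots> = frag_extend (\<lambda>x. frag_cmul (eps (Suc m)) (frag_of (e m x))) a"
  proof (rule frag_extend_eq)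
    fix x assume "x \<in> Poly_Mapping.keys a"
    then have xo: "x \<in> Ob" using a by blast
    have "Bf (Suc m) (e (Suc m) x) = (\<Sum>j\<le>Suc m. frag_cmul ((-1) ^ (Suc m - j)) (frag_of (e m x)))"
      unfolding Bf_def using face_e[OF xo] by (intro sum.cong) auto
    then show "(Bf (Suc m) \<circ> e (Suc m)) x = frag_cmul (eps (Suc m)) (frag_of (e m x))"
      by (simp add: sum_cmul_const eps_def del: sum.atMost_Suc)
  qed
  also have "\<dots> = frag_cmul (eps (Suc m)) (E m a)" by (simp add: frag_extend_cmul_fun E_def)
  finally show ?thesis .
qed


lemma grp: "group (CG n)" by (simp add: chain_group_def)

lemma R_hom: "group_hom (CG n) (free_Abelian_group Ob) R"
proof (rule group_hom.intro)
  show "group (CG n)" by (rule grp)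
  show "group (free_Abelian_group Ob)" by simp
  show "group_hom_axioms (CG n) (free_Abelian_group Ob) R"
    by (rule group_hom_axioms.intro) (auto simp: hom_def R_keys R_add chain_group_def)
qed

lemma B_sub: "subgroup (boundaries C n) (CG n)"
  unfolding boundaries_def
proof (rule group.generate_is_subgroup[OF grp])
  show "bdry C (Suc n) ` carrier (CG (Suc n)) \<union> rels n \<subseteq> carrier (CG n)"
    using bdry_carrier subgroup.subset[OF rels_sub] by blast
qed

lemma rels_B: "c \<in> rels n \<Longrightarrow> c \<in> boundaries C n"
  unfolding boundaries_def by (rule generate.incl) simp

lemma bdry_B: "d \<in> carrier (CG (Suc n)) \<Longrightarrow> bdry C (Suc n) d \<in> boundaries C n"
  unfolding boundaries_def by (rule generate.incl) simp

lemma B_add: "a \<in> boundaries C n \<Longrightarrow> b \<in> boundaries C n \<Longrightarrow> a + b \<in> boundaries C n"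
  using subgroup.m_closed[OF B_sub[of n], of a b] by (simp add: chain_group_def)

lemma B0_kernel: "boundaries C 0 = kernel (CG 0) (free_Abelian_group Ob) R"
proof
  show "boundaries C 0 \<subseteq> kernel (CG 0) (free_Abelian_group Ob) R"
    unfolding boundaries_def
  proof (rule group.generate_subgroup_incl[OF grp])
    show "subgroup (kernel (CG 0) (free_Abelian_group Ob) R) (CG 0)"
      by (rule group_hom.subgroup_kernel[OF R_hom])
    show "bdry C (Suc 0) ` carrier (CG (Suc 0)) \<union> rels 0 \<subseteq> kernel (CG 0) (free_Abelian_group Ob) R"
    proof
      fix c assume "c \<in> bdry C (Suc 0) ` carrier (CG (Suc 0)) \<union> rels 0"
      then show "c \<in> kernel (CG 0) (free_Abelian_group Ob) R"
      proof
        assume "c \<in> bdry C (Suc 0) ` carrier (CG (Suc 0))"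
        then obtain d where d: "d \<in> carrier (CG (Suc 0))" "c = bdry C (Suc 0) d" by blast
        have "R c = 0" using R_bdry[OF d(1)] d(2) eps_val[of 1] by simp
        then show ?thesis using bdry_carrier[OF d(1)] d(2) by (simp add: kernel_def)
      next
        assume "c \<in> rels 0"
        then show ?thesis using R_rels subgroup.subset[OF rels_sub] by (auto simp: kernel_def)
      qed
    qed
  qed
next
  show "kernel (CG 0) (free_Abelian_group Ob) R \<subseteq> boundaries C 0"
    using rels_iff rels_B by (auto simp: kernel_def)
qed

lemma HH0: "HH C 0 \<cong> free_Abelian_group Ob"
proof -
  have "HH C 0 = CG 0 Mod kernel (CG 0) (free_Abelian_group Ob) R"
    unfolding HH_def cycles_def B0_kernel[symmetric]
    by (simp add: group.subgroup_generated_group_carrier[OF grp])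
  moreover have "R ` carrier (CG 0) = carrier (free_Abelian_group Ob)"
  proof
    show "R ` carrier (CG 0) \<subseteq> carrier (free_Abelian_group Ob)" using R_keys by auto
    show "carrier (free_Abelian_group Ob) \<subseteq> R ` carrier (CG 0)"
    proof
      fix a assume "a \<in> carrier (free_Abelian_group Ob)"
      then have a: "Poly_Mapping.keys a \<subseteq> Ob" by simp
      then show "a \<in> R ` carrier (CG 0)" using R_E[OF a, of 0] E_carrier[OF a, of 0] by (metis image_eqI)
    qed
  qed
  ultimately show ?thesis using group_hom.FactGroup_iso[OF R_hom] by simp
qed

lemma triv_mod: "group H \<Longrightarrow> trivial_group (H Mod carrier H)"
proof -
  assume gH: "group H"
  interpret group H by (rule gH)
  have nm: "carrier H \<lhd> H" by (rule normal_self)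
  have "carrier (H Mod carrier H) = {carrier H}"
    unfolding FactGroup_def RCOSETS_def
    using subgroup.rcos_const[OF subgroup_self] one_closed by auto
  then show ?thesis unfolding trivial_group_def
    using normal.factorgroup_is_group[OF nm] by (simp add: FactGroup_def)
qed

lemma Z_sub: "subgroup (cycles C (Suc m)) (CG (Suc m))"
proof (rule subgroup.intro)
  show "cycles C (Suc m) \<subseteq> carrier (CG (Suc m))" by (auto simp: cycles_def)
  show "x \<otimes>\<^bsub>CG (Suc m)\<^esub> y \<in> cycles C (Suc m)" if "x \<in> cycles C (Suc m)" "y \<in> cycles C (Suc m)" for x y
    using that subgroup.m_closed[OF grp[THEN group.subgroup_self, of "Suc m"]] rels_add
    by (auto simp: cycles_def bdry_add chain_group_def)
  show "\<one>\<^bsub>CG (Suc m)\<^esub> \<in> cycles C (Suc m)"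
    by (simp add: cycles_def chain_group_def bdry_0 rels_zero)
  show "inv\<^bsub>CG (Suc m)\<^esub> x \<in> cycles C (Suc m)" if "x \<in> cycles C (Suc m)" for x
    using that rels_neg by (auto simp: cycles_def bdry_neg chain_group_def)
qed

lemma Z_eq_B: "cycles C (Suc m) = boundaries C (Suc m)"
proof
  show "cycles C (Suc m) \<subseteq> boundaries C (Suc m)"
  proof
    fix c assume c: "c \<in> cycles C (Suc m)"
    then have cc: "c \<in> carrier (CG (Suc m))" and bc: "bdry C (Suc m) c \<in> rels m" by (auto simp: cycles_def)
    have k: "Poly_Mapping.keys (R c) \<subseteq> Ob" by (rule R_keys[OF cc])
    have 1: "c - E (Suc m) (R c) \<in> boundaries C (Suc m)" by (rule rels_B[OF reduce[OF cc]])
    have 2: "E (Suc m) (R c) \<in> boundaries C (Suc m)"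
    proof (cases "even m")
      case True
      have "bdry C (Suc (Suc m)) (E (Suc (Suc m)) (R c)) = E (Suc m) (R c)"
        using bdry_E[OF k, of "Suc m"] eps_val[of "Suc (Suc m)"] True by simp
      then show ?thesis using bdry_B[OF E_carrier[OF k]] by metis
    next
      case False
      have "R (bdry C (Suc m) c) = 0" using R_rels[OF bc] .
      then have "R c = 0" using R_bdry[OF cc] eps_val[of "Suc m"] False by simp
      then show ?thesis using subgroup.one_closed[OF B_sub[of "Suc m"]] by (simp add: chain_group_def)
    qed
    have "c = (c - E (Suc m) (R c)) + E (Suc m) (R c)" by simp
    then show "c \<in> boundaries C (Suc m)" using B_add[OF 1 2] by metis
  qed
next
  show "boundaries C (Suc m) \<subseteq> cycles C (Suc m)"
    unfolding boundaries_def
  proof (rule group.generate_subgroup_incl[OF grp Un_least Z_sub])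
    show "bdry C (Suc (Suc m)) ` carrier (CG (Suc (Suc m))) \<subseteq> cycles C (Suc m)"
    proof
      fix c assume "c \<in> bdry C (Suc (Suc m)) ` carrier (CG (Suc (Suc m)))"
      then obtain d where d: "d \<in> carrier (CG (Suc (Suc m)))" "c = bdry C (Suc (Suc m)) d" by blast
      have cc: "c \<in> carrier (CG (Suc m))" using bdry_carrier[OF d(1)] d(2) by simp
      have "R (bdry C (Suc m) c) = 0"
        using R_bdry[OF cc] R_bdry[OF d(1)] d(2) eps_val[of "Suc m"] eps_val[of "Suc (Suc m)"] by auto
      then have "bdry C (Suc m) c \<in> rels m" using rels_iff bdry_carrier[OF cc] by blast
      then show "c \<in> cycles C (Suc m)" using cc by (simp add: cycles_def)
    qed
    show "rels (Suc m) \<subseteq> cycles C (Suc m)"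
    proof
      fix c assume r: "c \<in> rels (Suc m)"
      have cc: "c \<in> carrier (CG (Suc m))" using subgroup.subset[OF rels_sub] r by blast
      have "R (bdry C (Suc m) c) = 0" using R_bdry[OF cc] R_rels[OF r] by simp
      then have "bdry C (Suc m) c \<in> rels m" using rels_iff bdry_carrier[OF cc] by blast
      then show "c \<in> cycles C (Suc m)" using cc by (simp add: cycles_def)
    qed
  qed
qed

lemma HHpos: "trivial_group (HH C (Suc m))"
proof -
  have "carrier (subgroup_generated (CG (Suc m)) (cycles C (Suc m))) = cycles C (Suc m)"
    by (rule subgroup.carrier_subgroup_generated_subgroup[OF Z_sub])
  then have eq: "HH C (Suc m) = subgroup_generated (CG (Suc m)) (cycles C (Suc m)) Mod
      carrier (subgroup_generated (CG (Suc m)) (cycles C (Suc m)))"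
    unfolding HH_def using Z_eq_B by simp
  show ?thesis unfolding eq by (rule triv_mod[OF group.group_subgroup_generated[OF grp]])
qed

end

theorem proposition4p2:
  fixes C :: "('o, 'm) lincat"
  assumes "linear_category C"
    and "strongly_upper_triangular C"
  shows "HH C 0 \<cong> free_Abelian_group (lc_Ob C) \<and> (\<forall>i>0. trivial_group (HH C i))"
proof -
  interpret sut C using assms by (rule sut.intro)
  show ?thesis using HH0 HHpos by (metis gr0_implies_Suc)
qed

end
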